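(* The expected numbers $E^S_n$ of napkinless diners under algorithm $S$ satisfy $E^S_1=E^S_2=0$, $E^S_3=1/2$, $E^S_4=3/4$, and, for all $n\ge 5$, \[ E^S_n=\frac12\left(E^S_{n-1}+E^S_{\lfloor\frac{n+1}{2}\rfloor}+E^S_{\lceil\frac{n+1}{2}\rceil}\right). \]
   Context: Seating model. A circular table has $n\ge 1$ seats, with exactly one napkin between each pair of adjacent seats ($n$ napkins in total). "Left" and "right" are from the perspective of a seated diner. Diners $1,\dots,n$ arrive in this order and a maitre d' chooses a seat for each. A preference order is $\sigma=(\sigma_1,\dots,\sigma_n)\in\{-1,1\}^n$, where $\sigma_j=+1$ means diner $j$ prefers the napkin on their right and $\sigma_j=-1$ the napkin on their left. When diner $j$ is seated, they take their preferred adjacent napkin if it is still on the table; otherwise the other adjacent napkin if still on the table; otherwise they are napkinless. Label the seats $1,\dots,n$ so that seat $1$ is the seat of diner $1$ and seats $2,3,\dots,n$ follow successively to the right of seat $1$. The "previous diner" means the most recently seated diner. Algorithm $S$ (napkin shunning). Seat diner 1 in seat 1. Then repeat: (S1) If all seats are filled, stop. If the seat adjacent to the previous diner on the side opposite to that diner's preference is empty, go to S2; otherwise go to S3. (S2) Seat the next diner in that seat; return to S1. (S3) A gap is a maximal block of consecutive empty seats (these are intervals of seat labels within $2,\dots,n$); take the gap containing the smallest-labelled empty seat, let $i$ be its number of seats, and seat the next diner in the $\lceil i/2\rceil$-th seat of this gap counting from its smallest-labelled seat (which counts as the 1st); return to S1. $\nu_S(\sigma)$ is the number of napkinless diners when the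 $n$ diners with preference order $\sigma$ are seated at the circular table with $n$ seats by algorithm $S$, and $E^S_n=2^{-n}\sum_{\sigma\in\{-1,1\}^n}\nu_S(\sigma)$. *)

theory Defs
  imports Complex_Main
begin

text \<open>Seats are labelled 1..n, seat k+1 immediately to the right of seat k (circularly,
  seat 1 to the right of seat n). Napkin k (1 \<le> k \<le> n) lies between seat k and the seat to
  its right; so the right napkin of seat s is napkin s and its left napkin is napkin s-1
  (napkin n for s = 1). Preferences are integers in {-1,1}: +1 = right, -1 = left.\<close>

definition right_seat :: "nat \<Rightarrow> nat \<Rightarrow> nat" where
  "right_seat n s = (if s = n then 1 else s + 1)"

definition left_seat :: "nat \<Rightarrow> nat \<Rightarrow> nat" where
  "left_seat n s = (if s = 1 then n else s - 1)"

definition right_napkin :: "nat \<Rightarrow> nat \<Rightarrow> nat" where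
  "right_napkin n s = s"

definition left_napkin :: "nat \<Rightarrow> nat \<Rightarrow> nat" where
  "left_napkin n s = (if s = 1 then n else s - 1)"

text \<open>Step S3: the gap containing the smallest-labelled empty seat m has length i
  (seats m, ..., m+i-1 empty, and m+i is filled or beyond n); choose its ceil(i/2)-th seat.\<close>
definition gap_seat :: "nat \<Rightarrow> nat set \<Rightarrow> nat" where
  "gap_seat n filled =
     (let m = Min ({2..n} - filled);
          i = (LEAST k. n < m + k \<or> m + k \<in> filled)
      in m + nat \<lceil>real i / 2\<rceil> - 1)"

definition next_seat :: "nat \<Rightarrow> nat set \<Rightarrow> nat \<Rightarrow> int \<Rightarrow> nat" where
  "next_seat n filled p q =
     (let t = (if q = 1 then left_seat n p else right_seat n p)
      in if t \<notin> filled then t else gap_seat n filled)"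

definition take_napkin :: "nat \<Rightarrow> nat set \<Rightarrow> nat \<Rightarrow> int \<Rightarrow> nat set \<times> nat" where
  "take_napkin n taken s x =
     (let pn = (if x = 1 then right_napkin n s else left_napkin n s);
          on = (if x = 1 then left_napkin n s else right_napkin n s)
      in if pn \<notin> taken then (insert pn taken, 0)
         else if on \<notin> taken then (insert on taken, 0)
         else (taken, 1))"

fun seat_rest :: "nat \<Rightarrow> nat set \<Rightarrow> nat set \<Rightarrow> nat \<Rightarrow> int \<Rightarrow> int list \<Rightarrow> nat" where
  "seat_rest n filled taken p q [] = 0"
| "seat_rest n filled taken p q (x # xs) =
     (let s = next_seat n filled p q;
          (taken', c) = take_napkin n taken s x
      in c + seat_rest n (insert s filled) taken' s x xs)"

definition nu_S :: "int list \<Rightarrow> nat" where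
  "nu_S \<sigma> = (case \<sigma> of [] \<Rightarrow> 0
     | x # xs \<Rightarrow> (let n = length \<sigma>; (taken, c) = take_napkin n {} 1 x
                 in c + seat_rest n {1} taken 1 x xs))"

definition pref_orders :: "nat \<Rightarrow> int list set" where
  "pref_orders n = {\<sigma>. length \<sigma> = n \<and> set \<sigma> \<subseteq> {-1, 1}}"

definition E_S :: "nat \<Rightarrow> real" where
  "E_S n = (\<Sum>\<sigma>\<in>pref_orders n. real (nu_S \<sigma>)) / 2 ^ n"

end

theory Submission imports Defs begin

function (sequential) Ff :: "nat \<Rightarrow> real" and Rf :: "nat \<Rightarrow> real" where
  "Ff 0 = 0"
| "Ff (Suc 0) = 1"
| "Ff (Suc (Suc 0)) = 1"
| "Ff (Suc (Suc (Suc k))) =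
     (Rf ((k + 2) div 2) + Ff ((k + 3) div 2) + Ff ((k + 2) div 2) + Rf ((k + 3) div 2)) / 2"
| "Rf 0 = 0"
| "Rf (Suc k) = (Rf k + Ff k) / 2"
  by pat_completeness auto
termination
  by (relation "measure (\<lambda>x. case x of Inl n \<Rightarrow> n | Inr n \<Rightarrow> n)") auto

lemma pref_orders_Suc:
  "pref_orders (Suc L) = (\<lambda>xs. (-1) # xs) ` pref_orders L \<union> (\<lambda>xs. 1 # xs) ` pref_orders L"
proof -
  have "\<sigma> \<in> (\<lambda>xs. (-1) # xs) ` pref_orders L \<union> (\<lambda>xs. 1 # xs) ` pref_orders L"
    if "\<sigma> \<in> pref_orders (Suc L)" for \<sigma>
    using that by (cases \<sigma>) (auto simp: pref_orders_def)
  then show ?thesis by (auto simp: pref_orders_def)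
qed

lemma finite_pref_orders: "finite (pref_orders L)"
proof (induction L)
  case 0
  have "pref_orders 0 = {[]}" by (auto simp: pref_orders_def)
  then show ?case by simp
next
  case (Suc L)
  then show ?case by (simp add: pref_orders_Suc)
qed

lemma sum_pref_orders_Suc:
  "(\<Sum>\<sigma>\<in>pref_orders (Suc L). f \<sigma>) =
   (\<Sum>xs\<in>pref_orders L. f ((-1) # xs)) + (\<Sum>xs\<in>pref_orders L. f (1 # xs))"
proof -
  have d: "(\<lambda>xs. (-1::int) # xs) ` pref_orders L \<inter> (\<lambda>xs. 1 # xs) ` pref_orders L = {}" by auto
  have "(\<Sum>\<sigma>\<in>pref_orders (Suc L). f \<sigma>) =
     (\<Sum>\<sigma>\<in>(\<lambda>xs. (-1) # xs) ` pref_orders L. f \<sigma>) + (\<Sum>\<sigma>\<in>(\<lambda>xs. 1 # xs) ` pref_orders L. f \<sigma>)"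
    unfolding pref_orders_Suc by (rule sum.union_disjoint) (use d finite_pref_orders in auto)
  also have "\<dots> = (\<Sum>xs\<in>pref_orders L. f ((-1) # xs)) + (\<Sum>xs\<in>pref_orders L. f (1 # xs))"
    by (subst sum.reindex, simp add: inj_on_def)+ simp
  finally show ?thesis .
qed

lemma pref_orders_0: "pref_orders 0 = {[]}" by (auto simp: pref_orders_def)

lemma card_pref_orders: "card (pref_orders L) = 2 ^ L"
proof (induction L)
  case 0
  then show ?case by (simp add: pref_orders_0)
next
  case (Suc L)
  have d: "(\<lambda>xs. (-1::int) # xs) ` pref_orders L \<inter> (\<lambda>xs. 1 # xs) ` pref_orders L = {}" by auto
  have "card (pref_orders (Suc L)) = card ((\<lambda>xs. (-1) # xs) ` pref_orders L) + card ((\<lambda>xs. 1 # xs) ` pref_orders L)"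
    unfolding pref_orders_Suc by (rule card_Un_disjoint) (use d finite_pref_orders in auto)
  also have "\<dots> = 2 ^ Suc L" using Suc by (simp add: card_image inj_on_def)
  finally show ?case .
qed

definition V :: "nat \<Rightarrow> nat set \<Rightarrow> nat set \<Rightarrow> nat \<Rightarrow> int \<Rightarrow> nat \<Rightarrow> real" where
  "V n filled taken p q L = (\<Sum>xs\<in>pref_orders L. real (seat_rest n filled taken p q xs))"

lemma V_Suc:
  assumes "s = next_seat n filled p q"
    and "take_napkin n taken s (-1) = (T1, c1)" and "take_napkin n taken s 1 = (T2, c2)"
  shows "V n filled taken p q (Suc L) =
    2^L * real c1 + V n (insert s filled) T1 s (-1) L + 2^L * real c2 + V n (insert s filled) T2 s 1 L"
  using assms by (simp add: V_def sum_pref_orders_Suc sum.distrib card_pref_orders Let_def)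

definition emp :: "(nat \<times> nat) set \<Rightarrow> nat set" where
  "emp G = (\<Union>g\<in>G. {fst g..snd g})"

definition ginv :: "nat \<Rightarrow> (nat \<times> nat) set \<Rightarrow> bool" where
  "ginv n G = (finite G \<and> (\<forall>g\<in>G. 2 \<le> fst g \<and> fst g \<le> snd g \<and> snd g \<le> n) \<and>
     (\<forall>g\<in>G. \<forall>h\<in>G. g \<noteq> h \<longrightarrow> snd g + 1 < fst h \<or> snd h + 1 < fst g))"

definition gclosed :: "nat set \<Rightarrow> nat \<times> nat \<Rightarrow> bool" where
  "gclosed T g = (fst g - 1 \<in> T \<and> snd g \<in> T \<and> (\<forall>k. fst g \<le> k \<and> k < snd g \<longrightarrow> k \<notin> T))"

definition binv :: "nat \<Rightarrow> (nat \<times> nat) set \<Rightarrow> nat set \<Rightarrow> nat set \<Rightarrow> bool" where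
  "binv n G filled taken = (ginv n G \<and> filled = {1..n} - emp G \<and> (\<forall>g\<in>G. gclosed taken g))"

definition opp :: "nat \<Rightarrow> nat \<Rightarrow> int \<Rightarrow> nat" where
  "opp n p q = (if q = 1 then left_seat n p else right_seat n p)"

definition psi :: "(nat \<times> nat) set \<Rightarrow> real" where
  "psi G = (\<Sum>g\<in>G. Ff (snd g + 1 - fst g))"

definition runok :: "nat \<Rightarrow> nat set \<Rightarrow> nat \<Rightarrow> nat \<Rightarrow> nat \<Rightarrow> int \<Rightarrow> bool" where
  "runok n taken lo hi p q = ((\<forall>k. lo \<le> k \<and> k < hi \<longrightarrow> k \<notin> taken) \<and>
     ((q = 1 \<and> right_seat n hi = p \<and> hi \<notin> taken \<and> lo - 1 \<in> taken) \<or>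
      (q = -1 \<and> left_seat n lo = p \<and> lo - 1 \<notin> taken \<and> hi \<in> taken)))"

definition good :: "nat \<Rightarrow> nat set \<Rightarrow> nat set \<Rightarrow> nat \<Rightarrow> int \<Rightarrow> real \<Rightarrow> bool" where
  "good n filled taken p q v =
    ((\<exists>G. binv n G filled taken \<and> opp n p q \<in> filled \<and> v = psi G) \<or>
     (\<exists>G t. binv n G filled taken \<and> (t, t) \<in> G \<and> opp n p q = t \<and> v = psi G) \<or>
     (\<exists>G lo hi. ginv n (insert (lo, hi) G) \<and> (lo, hi) \<notin> G \<and>
        filled = {1..n} - emp (insert (lo, hi) G) \<and> (\<forall>g\<in>G. gclosed taken g) \<and>
        runok n taken lo hi p q \<and> v = psi G + Rf (hi + 1 - lo)))"

lemma next_seat_opp: "next_seat n filled p q = (if opp n p q \<notin> filled then opp n p q else gap_seat n filled)"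
  by (simp add: next_seat_def opp_def Let_def)

lemma emp_iff: "x \<in> emp G \<longleftrightarrow> (\<exists>g\<in>G. fst g \<le> x \<and> x \<le> snd g)"
  by (auto simp: emp_def)

lemma ginv_bounds: "ginv n G \<Longrightarrow> g \<in> G \<Longrightarrow> 2 \<le> fst g \<and> fst g \<le> snd g \<and> snd g \<le> n"
  by (auto simp: ginv_def)

lemma ginv_sep: "ginv n G \<Longrightarrow> g \<in> G \<Longrightarrow> h \<in> G \<Longrightarrow> g \<noteq> h \<Longrightarrow> snd g + 1 < fst h \<or> snd h + 1 < fst g"
  by (auto simp: ginv_def)

lemma ginv_finite: "ginv n G \<Longrightarrow> finite G"
  by (auto simp: ginv_def)

lemma ginv_subset: "ginv n G \<Longrightarrow> H \<subseteq> G \<Longrightarrow> ginv n H"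
  unfolding ginv_def by (meson finite_subset subsetD)

lemma emp_sub: "ginv n G \<Longrightarrow> x \<in> emp G \<Longrightarrow> 2 \<le> x \<and> x \<le> n"
  by (auto simp: emp_iff dest: ginv_bounds)

lemma gap_unique: "ginv n G \<Longrightarrow> g \<in> G \<Longrightarrow> h \<in> G \<Longrightarrow> fst g \<le> x \<Longrightarrow> x \<le> snd g \<Longrightarrow>
   fst h \<le> x \<Longrightarrow> x \<le> snd h \<Longrightarrow> g = h"
  using ginv_sep[of n G g h] by fastforce

lemma after_gap: "ginv n G \<Longrightarrow> g \<in> G \<Longrightarrow> snd g + 1 \<notin> emp G"
  unfolding emp_iff
proof
  assume a: "ginv n G" "g \<in> G" and "\<exists>h\<in>G. fst h \<le> snd g + 1 \<and> snd g + 1 \<le> snd h"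
  then obtain h where h: "h \<in> G" "fst h \<le> snd g + 1" "snd g + 1 \<le> snd h" by blast
  have "g \<noteq> h" using h by auto
  then show False using ginv_sep[OF a(1,2) h(1)] h ginv_bounds[OF a(1) a(2)] by auto
qed

lemma before_gap: "ginv n G \<Longrightarrow> g \<in> G \<Longrightarrow> fst g - 1 \<notin> emp G"
  unfolding emp_iff
proof
  assume a: "ginv n G" "g \<in> G" and "\<exists>h\<in>G. fst h \<le> fst g - 1 \<and> fst g - 1 \<le> snd h"
  then obtain h where h: "h \<in> G" "fst h \<le> fst g - 1" "fst g - 1 \<le> snd h" by blast
  have "2 \<le> fst g" "fst g \<le> snd g" using ginv_bounds[OF a] by auto
  moreover have "g \<noteq> h" using h ginv_bounds[OF a(1) h(1)] calculation by auto
  ultimately show False using ginv_sep[OF a(1,2) h(1)] h by auto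
qed

lemma emp_insert: "emp (insert g G) = {fst g..snd g} \<union> emp G"
  by (auto simp: emp_def)

lemma emp_Un: "emp (A \<union> B) = emp A \<union> emp B"
  by (auto simp: emp_def)

lemma emp_empty[simp]: "emp {} = {}"
  by (auto simp: emp_def)

lemma emp_remove_single:
  assumes "ginv n G" "(t, t) \<in> G"
  shows "emp (G - {(t, t)}) = emp G - {t}"
proof (intro set_eqI iffI)
  fix x assume "x \<in> emp (G - {(t, t)})"
  then obtain g where g: "g \<in> G" "g \<noteq> (t,t)" "fst g \<le> x" "x \<le> snd g" by (auto simp: emp_iff)
  have "x \<noteq> t"
  proof
    assume "x = t"
    then have "g = (t,t)" using gap_unique[OF assms(1) g(1) assms(2)] g by auto
    then show False using g by simp
  qed
  then show "x \<in> emp G - {t}" using g by (auto simp: emp_iff)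
next
  fix x assume x: "x \<in> emp G - {t}"
  then obtain g where g: "g \<in> G" "fst g \<le> x" "x \<le> snd g" by (auto simp: emp_iff)
  have "g \<noteq> (t,t)" using g x by auto
  then show "x \<in> emp (G - {(t, t)})" using g unfolding emp_iff by blast
qed

lemma psi_remove: "ginv n G \<Longrightarrow> g \<in> G \<Longrightarrow> psi G = Ff (snd g + 1 - fst g) + psi (G - {g})"
  unfolding psi_def by (simp add: sum.remove ginv_finite)

lemma psi_empty[simp]: "psi {} = 0" by (simp add: psi_def)

lemma take_both_taken:
  assumes "2 \<le> s" "s - 1 \<in> taken" "s \<in> taken"
  shows "take_napkin n taken s x = (taken, 1)"
  using assms by (simp add: take_napkin_def left_napkin_def right_napkin_def Let_def)

lemma opp_filled_single:
  assumes "ginv n G" "(t, t) \<in> G" "filled = {1..n} - emp G" "x = 1 \<or> x = -1"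
  shows "opp n t x \<in> insert t filled"
proof -
  have t: "2 \<le> t" "t \<le> n" using ginv_bounds[OF assms(1,2)] by auto
  have "t - 1 \<notin> emp G" using before_gap[OF assms(1,2)] by simp
  moreover have "t + 1 \<notin> emp G" using after_gap[OF assms(1,2)] by simp
  moreover have "1 \<notin> emp G" using emp_sub[OF assms(1)] by force
  ultimately show ?thesis using t assms(3,4)
    by (auto simp: opp_def left_seat_def right_seat_def)
qed

lemma good_K1I: "binv n G filled taken \<Longrightarrow> opp n p q \<in> filled \<Longrightarrow> good n filled taken p q (psi G)"
  unfolding good_def by (rule disjI1) (rule exI[of _ G], simp)

lemma good_K3I: "binv n G filled taken \<Longrightarrow> (t, t) \<in> G \<Longrightarrow> opp n p q = t \<Longrightarrow> good n filled taken p q (psi G)"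
  unfolding good_def by (rule disjI2, rule disjI1) (rule exI[of _ G], rule exI[of _ t], simp)

lemma good_K2I: "ginv n (insert (lo, hi) G) \<Longrightarrow> (lo, hi) \<notin> G \<Longrightarrow>
   filled = {1..n} - emp (insert (lo, hi) G) \<Longrightarrow> (\<forall>g\<in>G. gclosed taken g) \<Longrightarrow>
   runok n taken lo hi p q \<Longrightarrow> good n filled taken p q (psi G + Rf (hi + 1 - lo))"
  unfolding good_def by (rule disjI2, rule disjI2) (rule exI[of _ G], rule exI[of _ lo], rule exI[of _ hi], simp)

lemma fill_single:
  assumes "binv n G filled taken" "(t, t) \<in> G" "s = t"
    "take_napkin n taken s (-1) = (T1, c1)" "take_napkin n taken s 1 = (T2, c2)"
  shows "\<exists>v1 v2. s \<in> {1..n} \<and> s \<notin> filled \<and> good n (insert s filled) T1 s (-1) v1 \<and>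
     good n (insert s filled) T2 s 1 v2 \<and> 2 * psi G = real c1 + v1 + real c2 + v2"
proof -
  have gi: "ginv n G" and fi: "filled = {1..n} - emp G" and cl: "\<forall>g\<in>G. gclosed taken g"
    using assms(1) by (auto simp: binv_def)
  have t: "2 \<le> t" "t \<le> n" using ginv_bounds[OF gi assms(2)] by auto
  have te: "t \<in> emp G" using assms(2) by (force simp: emp_iff)
  have "gclosed taken (t,t)" using cl assms(2) by blast
  then have tk: "t - 1 \<in> taken" "t \<in> taken" by (auto simp: gclosed_def)
  have T: "T1 = taken" "c1 = 1" "T2 = taken" "c2 = 1"
    using take_both_taken[OF t(1) tk, of n] assms(3,4,5) by auto
  define G' where "G' = G - {(t,t)}"
  have gi': "ginv n G'" unfolding G'_def by (rule ginv_subset[OF gi]) auto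
  have e: "emp G' = emp G - {t}" unfolding G'_def by (rule emp_remove_single[OF gi assms(2)])
  have t1: "t \<in> {1..n}" using t by auto
  have fi': "insert t filled = {1..n} - emp G'"
    unfolding e fi using t1 by blast
  have b': "binv n G' (insert t filled) taken" using gi' fi' cl by (auto simp: binv_def G'_def)
  have g1: "good n (insert s filled) T1 s (-1) (psi G')"
    using good_K1I[OF b' opp_filled_single[OF gi assms(2) fi, of "-1"]] assms(3) T by simp
  have g2: "good n (insert s filled) T2 s 1 (psi G')"
    using good_K1I[OF b' opp_filled_single[OF gi assms(2) fi, of "1"]] assms(3) T by simp
  have "psi G = 1 + psi G'" using psi_remove[OF gi assms(2)] by (simp add: G'_def)
  moreover have "s \<in> {1..n}" "s \<notin> filled" using assms(3) t te fi by auto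
  ultimately show ?thesis using g1 g2 T by (intro exI[of _ "psi G'"]) auto
qed

lemma step_K3:
  assumes "binv n G filled taken" "(t, t) \<in> G" "opp n p q = t"
    "s = next_seat n filled p q" "take_napkin n taken s (-1) = (T1, c1)" "take_napkin n taken s 1 = (T2, c2)"
  shows "\<exists>v1 v2. s \<in> {1..n} \<and> s \<notin> filled \<and> good n (insert s filled) T1 s (-1) v1 \<and>
     good n (insert s filled) T2 s 1 v2 \<and> 2 * psi G = real c1 + v1 + real c2 + v2"
proof -
  have fi: "filled = {1..n} - emp G" using assms(1) by (auto simp: binv_def)
  have te: "t \<in> emp G" using assms(2) by (force simp: emp_iff)
  have st: "s = t" using assms(3,4) te fi by (simp add: next_seat_opp)
  show ?thesis by (rule fill_single[OF assms(1,2) st assms(5,6)])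
qed

lemma sep_napkin:
  assumes "ginv n (insert g G0)" "g \<notin> G0" "g' \<in> G0" "fst g - 1 \<le> k" "k \<le> snd g"
  shows "\<not> (fst g' \<le> k \<and> k < snd g')"
proof -
  have "g \<noteq> g'" using assms by auto
  then have "snd g + 1 < fst g' \<or> snd g' + 1 < fst g" using ginv_sep[OF assms(1), of g g'] assms(3) by auto
  then show ?thesis using assms(4,5) by auto
qed

lemma gclosed_insert: "gclosed T g' \<Longrightarrow> \<not> (fst g' \<le> k \<and> k < snd g') \<Longrightarrow> gclosed (insert k T) g'"
  by (auto simp: gclosed_def)

lemma seat_not_other:
  assumes "ginv n (insert g G0)" "g \<notin> G0" "fst g - 1 \<le> x" "x \<le> snd g + 1"
  shows "x \<notin> emp G0"
proof
  assume "x \<in> emp G0"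
  then obtain g' where g': "g' \<in> G0" "fst g' \<le> x" "x \<le> snd g'" by (auto simp: emp_iff)
  have "g \<noteq> g'" using assms g' by auto
  then have "snd g + 1 < fst g' \<or> snd g' + 1 < fst g" using ginv_sep[OF assms(1), of g g'] g' by auto
  moreover have "2 \<le> fst g" using ginv_bounds[OF assms(1), of g] by auto
  ultimately show False using assms(3,4) g' by auto
qed

lemma one_not_emp: "ginv n G \<Longrightarrow> 1 \<notin> emp G"
  using emp_sub by fastforce

lemma ginv_pieces:
  assumes "ginv n (insert g G0)" "g \<notin> G0" "finite H"
    "\<forall>h\<in>H. fst g \<le> fst h \<and> fst h \<le> snd h \<and> snd h \<le> snd g"
    "\<forall>h\<in>H. \<forall>h'\<in>H. h \<noteq> h' \<longrightarrow> snd h + 1 < fst h' \<or> snd h' + 1 < fst h"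
  shows "ginv n (H \<union> G0)"
proof -
  have "finite (insert g G0)" using ginv_finite[OF assms(1)] .
  then have fin: "finite (H \<union> G0)" using assms(3) by simp
  have bd: "\<forall>x\<in>H \<union> G0. 2 \<le> fst x \<and> fst x \<le> snd x \<and> snd x \<le> n"
  proof
    fix x assume "x \<in> H \<union> G0"
    then show "2 \<le> fst x \<and> fst x \<le> snd x \<and> snd x \<le> n"
    proof
      assume "x \<in> H" then show ?thesis using assms(4) ginv_bounds[OF assms(1), of g] by force
    next
      assume "x \<in> G0" then show ?thesis using ginv_bounds[OF assms(1), of x] by auto
    qed
  qed
  have sp: "snd x + 1 < fst y \<or> snd y + 1 < fst x" if "x \<in> H \<union> G0" "y \<in> H \<union> G0" "x \<noteq> y" for x y
  proof -
    have c1: "snd x + 1 < fst y \<or> snd y + 1 < fst x" if "x \<in> H" "y \<in> G0" for x y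
    proof -
      have "g \<noteq> y" using assms(2) that by auto
      then have "snd g + 1 < fst y \<or> snd y + 1 < fst g" using ginv_sep[OF assms(1), of g y] that by auto
      then show ?thesis using assms(4) that by force
    qed
    show ?thesis
      using that c1[of x y] c1[of y x] assms(5) ginv_sep[OF assms(1), of x y] by auto
  qed
  show ?thesis unfolding ginv_def using fin bd sp by blast
qed

lemma pieces_disjoint:
  assumes "ginv n (insert g G0)" "g \<notin> G0" "\<forall>h\<in>H. fst g \<le> fst h \<and> fst h \<le> snd h \<and> snd h \<le> snd g"
  shows "H \<inter> G0 = {}"
proof -
  have "False" if "h \<in> H" "h \<in> G0" for h
  proof -
    have "g \<noteq> h" using assms(2) that by auto
    then show False using ginv_sep[OF assms(1), of g h] that assms(3) by force
  qed
  then show ?thesis by blast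
qed

lemma filled_upd:
  assumes "ginv n (insert g G0)" "g \<notin> G0" "filled = {1..n} - emp (insert g G0)"
    "fst g \<le> s" "s \<le> snd g" "emp H = {fst g..snd g} - {s}"
  shows "insert s filled = {1..n} - emp (H \<union> G0)"
proof -
  have "s \<notin> emp G0" using seat_not_other[OF assms(1,2)] assms(4,5) by auto
  moreover have "1 \<le> s" "s \<le> n" using ginv_bounds[OF assms(1), of g] assms(4,5) by auto
  ultimately have s1: "s \<in> {1..n}" "s \<in> {fst g..snd g}" "s \<notin> emp G0" using assms(4,5) by auto
  show ?thesis unfolding assms(3) emp_insert emp_Un assms(6) using s1 by blast
qed

lemma psi_Un: "ginv n (H \<union> G0) \<Longrightarrow> H \<inter> G0 = {} \<Longrightarrow> psi (H \<union> G0) = psi H + psi G0"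
  unfolding psi_def by (rule sum.union_disjoint) (auto dest: ginv_finite)

lemma psi_insert: assumes "ginv n (insert g G0)" "g \<notin> G0" shows "psi (insert g G0) = Ff (snd g + 1 - fst g) + psi G0"
proof -
  have "finite (insert g G0)" by (rule ginv_finite[OF assms(1)])
  then have "finite G0" by simp
  then show ?thesis unfolding psi_def using sum.insert[of G0 g] assms(2) by simp
qed

lemma left_right_seat: "1 \<le> hi \<Longrightarrow> hi \<le> n \<Longrightarrow> left_seat n (right_seat n hi) = hi"
  by (auto simp: left_seat_def right_seat_def)

lemma right_left_seat: "2 \<le> lo \<Longrightarrow> lo \<le> n \<Longrightarrow> right_seat n (left_seat n lo) = lo"
  by (auto simp: left_seat_def right_seat_def)

lemma right_seat_filled:
  assumes "ginv n G" "filled = {1..n} - emp G" "hi \<le> n" "1 \<le> hi" "hi + 1 \<le> n \<Longrightarrow> hi + 1 \<notin> emp G"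
  shows "right_seat n hi \<in> filled"
  using assms one_not_emp[OF assms(1)] by (auto simp: right_seat_def)


lemma gclosed_G0:
  assumes "\<forall>g'\<in>G0. gclosed taken g'" "ginv n (insert g G0)" "g \<notin> G0" "fst g - 1 \<le> k" "k \<le> snd g"
  shows "\<forall>g'\<in>G0. gclosed (insert k taken) g'"
  using assms sep_napkin[OF assms(2,3)] gclosed_insert by blast

lemma binv_build:
  assumes gi: "ginv n (insert g G0)" and nin: "g \<notin> G0" and fi: "filled = {1..n} - emp (insert g G0)"
    and s: "fst g \<le> s" "s \<le> snd g" and eH: "emp H = {fst g..snd g} - {s}" and fH: "finite H"
    and wH: "\<forall>h\<in>H. fst g \<le> fst h \<and> fst h \<le> snd h \<and> snd h \<le> snd g"
    and sH: "\<forall>h\<in>H. \<forall>h'\<in>H. h \<noteq> h' \<longrightarrow> snd h + 1 < fst h' \<or> snd h' + 1 < fst h"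
    and cl: "\<forall>g'\<in>G0. gclosed taken g'" and k: "fst g - 1 \<le> k" "k \<le> snd g"
    and cH: "\<forall>h\<in>H. gclosed (insert k taken) h"
  shows "binv n (H \<union> G0) (insert s filled) (insert k taken)"
proof -
  have "ginv n (H \<union> G0)" by (rule ginv_pieces[OF gi nin fH wH sH])
  moreover have "insert s filled = {1..n} - emp (H \<union> G0)" by (rule filled_upd[OF gi nin fi s eH])
  moreover have "\<forall>g'\<in>G0. gclosed (insert k taken) g'" by (rule gclosed_G0[OF cl gi nin k])
  ultimately show ?thesis unfolding binv_def using cH by blast
qed

lemma step_K2_left:
  assumes gi: "ginv n (insert (lo, hi) G)" and nin: "(lo, hi) \<notin> G"
    and fi: "filled = {1..n} - emp (insert (lo, hi) G)" and cl: "\<forall>g\<in>G. gclosed taken g"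
    and int: "\<forall>k. lo \<le> k \<and> k < hi \<longrightarrow> k \<notin> taken"
    and rp: "right_seat n hi = p" and hn: "hi \<notin> taken" and ln: "lo - 1 \<in> taken"
    and sd: "s = next_seat n filled p 1"
    and t1: "take_napkin n taken s (-1) = (T1, c1)" and t2: "take_napkin n taken s 1 = (T2, c2)"
  shows "\<exists>v1 v2. s \<in> {1..n} \<and> s \<notin> filled \<and> good n (insert s filled) T1 s (-1) v1 \<and>
     good n (insert s filled) T2 s 1 v2 \<and> 2 * (psi G + Rf (hi + 1 - lo)) = real c1 + v1 + real c2 + v2"
proof -
  have b: "2 \<le> lo" "lo \<le> hi" "hi \<le> n" using ginv_bounds[OF gi, of "(lo,hi)"] by auto
  have he: "hi \<in> emp (insert (lo, hi) G)" using b by (auto simp: emp_insert)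
  have hf: "hi \<notin> filled" using he fi by blast
  have op: "opp n p 1 = hi" using rp b left_right_seat[of hi n] by (simp add: opp_def)
  have s: "s = hi" using sd op hf by (simp add: next_seat_opp)
  have s1: "s \<in> {1..n}" "s \<notin> filled" using s b hf by auto
  have rn: "right_napkin n hi = hi" "left_napkin n hi = hi - 1" using b by (auto simp: right_napkin_def left_napkin_def)
  have fG: "finite G" using ginv_finite[OF gi] by simp
  have hp1: "hi + 1 \<notin> emp G" using seat_not_other[OF gi nin, of "hi + 1"] b by simp
  have lm1: "lo - 1 \<notin> emp G" using seat_not_other[OF gi nin, of "lo - 1"] b by simp
  show ?thesis
  proof (cases "lo = hi")
    case True
    have T: "T2 = insert hi taken" "c2 = 0" using t2 s rn hn by (auto simp: take_napkin_def Let_def)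
    have T': "T1 = insert hi taken" "c1 = 0" using t1 s rn hn ln True by (auto simp: take_napkin_def Let_def)
    have bi: "binv n ({} \<union> G) (insert s filled) (insert hi taken)"
      by (rule binv_build[OF gi nin fi]) (use b True s cl in auto)
    have bi': "binv n G (insert s filled) (insert hi taken)" using bi by simp
    have fi': "insert s filled = {1..n} - emp G" using bi' by (simp add: binv_def)
    have o1: "opp n s 1 \<in> insert s filled"
      using s b True lm1 fi' by (auto simp: opp_def left_seat_def)
    have o2: "opp n s (-1) \<in> insert s filled"
      unfolding opp_def using right_seat_filled[OF ginv_subset[OF gi] fi', of hi] hp1 b s by auto
    have g1: "good n (insert s filled) T1 s (-1) (psi G)" using good_K1I[OF bi' o2] T' by simp
    have g2: "good n (insert s filled) T2 s 1 (psi G)" using good_K1I[OF bi' o1] T by simp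
    have "Rf (hi + 1 - lo) = 0" using True by (simp add: numeral_2_eq_2)
    then show ?thesis using g1 g2 s1 T T' by (intro exI[of _ "psi G"]) auto
  next
    case False
    then have lh: "lo < hi" using b by simp
    have hm: "hi - 1 \<notin> taken" using int lh by auto
    have T: "T2 = insert hi taken" "c2 = 0" using t2 s rn hn by (auto simp: take_napkin_def Let_def)
    have T': "T1 = insert (hi - 1) taken" "c1 = 0" using t1 s rn hm by (auto simp: take_napkin_def Let_def)
    have eH: "emp {(lo, hi - 1)} = {fst (lo,hi)..snd (lo,hi)} - {s}" using s lh by (auto simp: emp_def)
    have wH: "\<forall>h\<in>{(lo, hi - 1)}. fst (lo,hi) \<le> fst h \<and> fst h \<le> snd h \<and> snd h \<le> snd (lo,hi)" using lh by auto
    have gi2: "ginv n (insert (lo, hi - 1) G)"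
      using ginv_pieces[OF gi nin _ wH] by simp
    have nin2: "(lo, hi - 1) \<notin> G" using pieces_disjoint[OF gi nin wH] by auto
    have fi2: "insert s filled = {1..n} - emp (insert (lo, hi - 1) G)"
      using filled_upd[OF gi nin fi _ _ eH] s b by simp
    have cl2: "\<forall>g'\<in>G. gclosed (insert hi taken) g'" by (rule gclosed_G0[OF cl gi nin]) (use b in auto)
    have ro: "runok n (insert hi taken) lo (hi - 1) s 1"
      unfolding runok_def using int lh ln hm s b by (auto simp: right_seat_def)
    have g2: "good n (insert s filled) T2 s 1 (psi G + Rf (hi - 1 + 1 - lo))"
      using good_K2I[OF gi2 nin2 fi2 cl2 ro] T by simp
    have cH: "\<forall>h\<in>{(lo, hi - 1)}. gclosed (insert (hi - 1) taken) h"
      using int ln by (auto simp: gclosed_def)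
    have bi: "binv n ({(lo, hi - 1)} \<union> G) (insert s filled) (insert (hi - 1) taken)"
      by (rule binv_build[OF gi nin fi _ _ eH _ wH _ cl _ _ cH]) (use b s lh in auto)
    have bi': "binv n (insert (lo, hi - 1) G) (insert s filled) (insert (hi - 1) taken)" using bi by simp
    have hp2: "hi + 1 \<notin> emp (insert (lo, hi - 1) G)" using hp1 by (auto simp: emp_insert)
    have o2: "opp n s (-1) \<in> insert s filled"
      unfolding opp_def using right_seat_filled[OF gi2 fi2, of hi] hp2 b s by auto
    have g1: "good n (insert s filled) T1 s (-1) (psi (insert (lo, hi - 1) G))"
      using good_K1I[OF bi' o2] T' by simp
    have ps: "psi (insert (lo, hi - 1) G) = Ff (hi - lo) + psi G"
      using psi_insert[OF gi2 nin2] lh by simp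
    have rf: "Rf (hi + 1 - lo) = (Rf (hi - lo) + Ff (hi - lo)) / 2"
      using lh by (simp add: Suc_diff_le)
    have "hi - 1 + 1 - lo = hi - lo" using lh by simp
    then show ?thesis using g1 g2 s1 T T' ps rf
      by (intro exI[of _ "psi (insert (lo, hi - 1) G)"] exI[of _ "psi G + Rf (hi - lo)"]) auto
  qed
qed


lemma step_K2_right:
  assumes gi: "ginv n (insert (lo, hi) G)" and nin: "(lo, hi) \<notin> G"
    and fi: "filled = {1..n} - emp (insert (lo, hi) G)" and cl: "\<forall>g\<in>G. gclosed taken g"
    and int: "\<forall>k. lo \<le> k \<and> k < hi \<longrightarrow> k \<notin> taken"
    and lp: "left_seat n lo = p" and ln: "lo - 1 \<notin> taken" and hn: "hi \<in> taken"
    and sd: "s = next_seat n filled p (-1)"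
    and t1: "take_napkin n taken s (-1) = (T1, c1)" and t2: "take_napkin n taken s 1 = (T2, c2)"
  shows "\<exists>v1 v2. s \<in> {1..n} \<and> s \<notin> filled \<and> good n (insert s filled) T1 s (-1) v1 \<and>
     good n (insert s filled) T2 s 1 v2 \<and> 2 * (psi G + Rf (hi + 1 - lo)) = real c1 + v1 + real c2 + v2"
proof -
  have b: "2 \<le> lo" "lo \<le> hi" "hi \<le> n" using ginv_bounds[OF gi, of "(lo,hi)"] by auto
  have le: "lo \<in> emp (insert (lo, hi) G)" using b by (auto simp: emp_insert)
  have lf: "lo \<notin> filled" using le fi by blast
  have op: "opp n p (-1) = lo" using lp b right_left_seat[of lo n] by (simp add: opp_def)
  have s: "s = lo" using sd op lf by (simp add: next_seat_opp)
  have s1: "s \<in> {1..n}" "s \<notin> filled" using s b lf by auto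
  have rn: "right_napkin n lo = lo" "left_napkin n lo = lo - 1" using b by (auto simp: right_napkin_def left_napkin_def)
  have fG: "finite G" using ginv_finite[OF gi] by simp
  have hp1: "hi + 1 \<notin> emp G" using seat_not_other[OF gi nin, of "hi + 1"] b by simp
  have lm1: "lo - 1 \<notin> emp G" using seat_not_other[OF gi nin, of "lo - 1"] b by simp
  show ?thesis
  proof (cases "lo = hi")
    case True
    have T: "T1 = insert (lo - 1) taken" "c1 = 0" using t1 s rn ln by (auto simp: take_napkin_def Let_def)
    have T': "T2 = insert (lo - 1) taken" "c2 = 0" using t2 s rn hn ln True by (auto simp: take_napkin_def Let_def)
    have bi: "binv n ({} \<union> G) (insert s filled) (insert (lo - 1) taken)"
      by (rule binv_build[OF gi nin fi]) (use b True s cl in auto)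
    have bi': "binv n G (insert s filled) (insert (lo - 1) taken)" using bi by simp
    have fi': "insert s filled = {1..n} - emp G" using bi' by (simp add: binv_def)
    have o1: "opp n s 1 \<in> insert s filled"
      using s b lm1 fi' by (auto simp: opp_def left_seat_def)
    have o2: "opp n s (-1) \<in> insert s filled"
      unfolding opp_def using right_seat_filled[OF ginv_subset[OF gi] fi', of hi] hp1 b s True by auto
    have g1: "good n (insert s filled) T1 s (-1) (psi G)" using good_K1I[OF bi' o2] T by simp
    have g2: "good n (insert s filled) T2 s 1 (psi G)" using good_K1I[OF bi' o1] T' by simp
    have "Rf (hi + 1 - lo) = 0" using True by (simp add: numeral_2_eq_2)
    then show ?thesis using g1 g2 s1 T T' by (intro exI[of _ "psi G"]) auto
  next
    case False
    then have lh: "lo < hi" using b by simp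
    have lo0: "lo \<notin> taken" using int lh by auto
    have T: "T1 = insert (lo - 1) taken" "c1 = 0" using t1 s rn ln by (auto simp: take_napkin_def Let_def)
    have T': "T2 = insert lo taken" "c2 = 0" using t2 s rn lo0 by (auto simp: take_napkin_def Let_def)
    have eH: "emp {(lo + 1, hi)} = {fst (lo,hi)..snd (lo,hi)} - {s}" using s lh by (auto simp: emp_def)
    have wH: "\<forall>h\<in>{(lo + 1, hi)}. fst (lo,hi) \<le> fst h \<and> fst h \<le> snd h \<and> snd h \<le> snd (lo,hi)" using lh by auto
    have gi2: "ginv n (insert (lo + 1, hi) G)"
      using ginv_pieces[OF gi nin _ wH] by simp
    have nin2: "(lo + 1, hi) \<notin> G" using pieces_disjoint[OF gi nin wH] by auto
    have fi2: "insert s filled = {1..n} - emp (insert (lo + 1, hi) G)"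
      using filled_upd[OF gi nin fi _ _ eH] s b by simp
    have cl2: "\<forall>g'\<in>G. gclosed (insert (lo - 1) taken) g'" by (rule gclosed_G0[OF cl gi nin]) (use b in auto)
    have ro: "runok n (insert (lo - 1) taken) (lo + 1) hi s (-1)"
      unfolding runok_def using int lh hn lo0 s b by (auto simp: left_seat_def)
    have g1: "good n (insert s filled) T1 s (-1) (psi G + Rf (hi + 1 - (lo + 1)))"
      using good_K2I[OF gi2 nin2 fi2 cl2 ro] T by simp
    have cH: "\<forall>h\<in>{(lo + 1, hi)}. gclosed (insert lo taken) h"
      using int hn by (auto simp: gclosed_def)
    have bi: "binv n ({(lo + 1, hi)} \<union> G) (insert s filled) (insert lo taken)"
      by (rule binv_build[OF gi nin fi _ _ eH _ wH _ cl _ _ cH]) (use b s lh in auto)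
    have bi': "binv n (insert (lo + 1, hi) G) (insert s filled) (insert lo taken)" using bi by simp
    have lm2: "lo - 1 \<notin> emp (insert (lo + 1, hi) G)" using lm1 by (auto simp: emp_insert)
    have o1: "opp n s 1 \<in> insert s filled"
      using s b lm2 fi2 by (auto simp: opp_def left_seat_def)
    have g2: "good n (insert s filled) T2 s 1 (psi (insert (lo + 1, hi) G))"
      using good_K1I[OF bi' o1] T' by simp
    have ps: "psi (insert (lo + 1, hi) G) = Ff (hi - lo) + psi G"
      using psi_insert[OF gi2 nin2] lh by simp
    have rf: "Rf (hi + 1 - lo) = (Rf (hi - lo) + Ff (hi - lo)) / 2"
      using lh by (simp add: Suc_diff_le)
    have "hi + 1 - (lo + 1) = hi - lo" using lh by simp
    then show ?thesis using g1 g2 s1 T T' ps rf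
      by (intro exI[of _ "psi G + Rf (hi - lo)"] exI[of _ "psi (insert (lo + 1, hi) G)"]) auto
  qed
qed

lemma nat_ceil_half: "nat \<lceil>real i / 2\<rceil> = (i + 1) div 2"
proof -
  have "\<lceil>real i / 2\<rceil> = int ((i + 1) div 2)"
  proof (rule ceiling_unique)
    show "real_of_int (int ((i + 1) div 2)) - 1 < real i / 2"
      by (cases "even i") (auto elim!: evenE oddE simp: field_simps)
    show "real i / 2 \<le> real_of_int (int ((i + 1) div 2))"
      by (cases "even i") (auto elim!: evenE oddE simp: field_simps)
  qed
  then show ?thesis by simp
qed

lemma K2_build:
  assumes gi: "ginv n (insert g G0)" and nin: "g \<notin> G0" and fi: "filled = {1..n} - emp (insert g G0)"
    and s: "fst g \<le> s" "s \<le> snd g" and eH: "emp (insert r H0) = {fst g..snd g} - {s}"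
    and fH: "finite H0" and rH: "r \<notin> H0"
    and wH: "\<forall>h\<in>insert r H0. fst g \<le> fst h \<and> fst h \<le> snd h \<and> snd h \<le> snd g"
    and sH: "\<forall>h\<in>insert r H0. \<forall>h'\<in>insert r H0. h \<noteq> h' \<longrightarrow> snd h + 1 < fst h' \<or> snd h' + 1 < fst h"
    and cl: "\<forall>g'\<in>G0. gclosed taken g'" and k: "fst g - 1 \<le> k" "k \<le> snd g"
    and cH: "\<forall>h\<in>H0. gclosed (insert k taken) h"
    and ro: "runok n (insert k taken) (fst r) (snd r) s x"
  shows "good n (insert s filled) (insert k taken) s x (psi H0 + psi G0 + Rf (snd r + 1 - fst r))"
proof -
  have fH': "finite (insert r H0)" using fH by simp
  have g1: "ginv n (insert r H0 \<union> G0)" by (rule ginv_pieces[OF gi nin fH' wH sH])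
  have d: "insert r H0 \<inter> G0 = {}" by (rule pieces_disjoint[OF gi nin wH])
  have f1: "insert s filled = {1..n} - emp (insert r H0 \<union> G0)" by (rule filled_upd[OF gi nin fi s eH])
  have c0: "\<forall>g'\<in>G0. gclosed (insert k taken) g'" by (rule gclosed_G0[OF cl gi nin k])
  have e: "insert r H0 \<union> G0 = insert (fst r, snd r) (H0 \<union> G0)" by simp
  have nr: "(fst r, snd r) \<notin> H0 \<union> G0" using rH d by auto
  have g2: "ginv n (insert (fst r, snd r) (H0 \<union> G0))" using g1 e by simp
  have f2: "insert s filled = {1..n} - emp (insert (fst r, snd r) (H0 \<union> G0))" using f1 e by simp
  have c2: "\<forall>g'\<in>H0 \<union> G0. gclosed (insert k taken) g'" using c0 cH by blast
  have "good n (insert s filled) (insert k taken) s x (psi (H0 \<union> G0) + Rf (snd r + 1 - fst r))"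
    by (rule good_K2I[OF g2 nr f2 c2 ro])
  moreover have "ginv n (H0 \<union> G0)" using g1 ginv_subset by blast
  moreover have "H0 \<inter> G0 = {}" using d by blast
  ultimately show ?thesis using psi_Un by simp
qed

lemma step_K1:
  assumes bi: "binv n G filled taken" and op: "opp n p q \<in> filled" and ne: "G \<noteq> {}"
    and sd: "s = next_seat n filled p q"
    and t1: "take_napkin n taken s (-1) = (T1, c1)" and t2: "take_napkin n taken s 1 = (T2, c2)"
  shows "\<exists>v1 v2. s \<in> {1..n} \<and> s \<notin> filled \<and> good n (insert s filled) T1 s (-1) v1 \<and>
     good n (insert s filled) T2 s 1 v2 \<and> 2 * psi G = real c1 + v1 + real c2 + v2"
proof -
  have gi: "ginv n G" and fi: "filled = {1..n} - emp G" and cl: "\<forall>g\<in>G. gclosed taken g"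
    using bi by (auto simp: binv_def)
  have fG: "finite G" using ginv_finite[OF gi] .
  define m where "m = Min (fst ` G)"
  have "m \<in> fst ` G" unfolding m_def using fG ne by simp
  then obtain h where mh: "(m, h) \<in> G" by force
  have mmin: "m \<le> fst g" if "g \<in> G" for g unfolding m_def using fG that by simp
  define G0 where "G0 = G - {(m, h)}"
  have GG: "G = insert (m, h) G0" using mh G0_def by blast
  have nin: "(m, h) \<notin> G0" using G0_def by blast
  have gi0: "ginv n (insert (m, h) G0)" using gi GG by simp
  have fi0: "filled = {1..n} - emp (insert (m, h) G0)" using fi GG by simp
  have cl0: "\<forall>g\<in>G0. gclosed taken g" using cl G0_def by blast
  have clmh: "gclosed taken (m, h)" using cl mh by blast
  have mb: "2 \<le> m" "m \<le> h" "h \<le> n" using ginv_bounds[OF gi mh] by auto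
  have tk: "m - 1 \<in> taken" "h \<in> taken" "\<And>k. m \<le> k \<Longrightarrow> k < h \<Longrightarrow> k \<notin> taken"
    using clmh by (auto simp: gclosed_def)
  have E: "{2..n} - filled = emp G" using fi emp_sub[OF gi] by auto
  have me: "m \<in> emp G" using mh mb by (force simp: emp_iff)
  have Mn: "Min ({2..n} - filled) = m"
  proof -
    have "finite (emp G)" using emp_sub[OF gi] by (meson finite_atLeastAtMost finite_subset subsetI atLeastAtMost_iff)
    moreover have "\<forall>x\<in>emp G. m \<le> x" using mmin by (force simp: emp_iff)
    ultimately show ?thesis unfolding E using me by (meson Min_eqI)
  qed
  define i where "i = h + 1 - m"
  have Lst: "(LEAST k. n < m + k \<or> m + k \<in> filled) = i"
  proof (rule Least_equality)
    have "h + 1 \<notin> emp G" using after_gap[OF gi mh] by simp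
    then show "n < m + i \<or> m + i \<in> filled" unfolding i_def using mb fi by auto
  next
    fix k assume k: "n < m + k \<or> m + k \<in> filled"
    show "i \<le> k"
    proof (rule ccontr)
      assume "\<not> i \<le> k"
      then have "m + k \<le> h" unfolding i_def by simp
      then have "m + k \<in> emp G" "m + k \<le> n" using mh mb by (force simp: emp_iff)+
      then show False using k fi by auto
    qed
  qed
  have mf: "m \<notin> filled" using me fi by blast
  define a where "a = (i - 1) div 2"
  have ss: "s = m + a"
  proof -
    have "s = gap_seat n filled" using sd op by (simp add: next_seat_opp)
    also have "\<dots> = m + nat \<lceil>real i / 2\<rceil> - 1" unfolding gap_seat_def Let_def Mn Lst by simp
    also have "\<dots> = m + a" unfolding nat_ceil_half a_def i_def using mb by simp
    finally show ?thesis .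
  qed
  have i1: "1 \<le> i" unfolding i_def using mb by simp
  have sr: "m \<le> s" "s \<le> h" using ss mb unfolding a_def i_def by auto
  have s1: "s \<in> {1..n}" "s \<notin> filled" using sr mb fi mh by (force simp: emp_iff)+
  have sn: "right_napkin n s = s" "left_napkin n s = s - 1" using sr mb by (auto simp: right_napkin_def left_napkin_def)
  have pG: "psi G = Ff i + psi G0" using psi_insert[OF gi0 nin] GG i_def by simp
  have mm1: "m - 1 \<notin> emp G0" using seat_not_other[OF gi0 nin, of "m - 1"] mb by simp
  show ?thesis
  proof (cases "i = 1")
    case True
    then have "h = m" "s = m" using i_def ss a_def mb by auto
    then show ?thesis using fill_single[OF bi _ _ t1 t2, of m] mh by simp
  next
    case False
    show ?thesis
    proof (cases "i = 2")
      case True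
      then have hm: "h = m + 1" and sm: "s = m" using i_def ss a_def mb by auto
      have mt: "m \<notin> taken" using tk(3)[of m] hm by simp
      have T2: "T2 = insert m taken" "c2 = 0" using t2 sm sn mt by (auto simp: take_napkin_def Let_def)
      have T1: "T1 = insert m taken" "c1 = 0" using t1 sm sn mt tk(1) by (auto simp: take_napkin_def Let_def)
      have eH: "emp {(m + 1, m + 1)} = {fst (m,h)..snd (m,h)} - {s}" using hm sm by (auto simp: emp_def)
      have cH: "\<forall>g\<in>{(m + 1, m + 1)}. gclosed (insert m taken) g" using tk(2) hm by (auto simp: gclosed_def)
      have b2: "binv n ({(m + 1, m + 1)} \<union> G0) (insert s filled) (insert m taken)"
        by (rule binv_build[OF gi0 nin fi0 _ _ eH _ _ _ cl0 _ _ cH]) (use hm sm mb in auto)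
      have b2': "binv n (insert (m + 1, m + 1) G0) (insert s filled) (insert m taken)" using b2 by simp
      have gi2: "ginv n (insert (m + 1, m + 1) G0)" using b2' by (simp add: binv_def)
      have fi2: "insert s filled = {1..n} - emp (insert (m + 1, m + 1) G0)" using b2' by (simp add: binv_def)
      have nin2: "(m + 1, m + 1) \<notin> G0" using pieces_disjoint[OF gi0 nin, of "{(m + 1, m + 1)}"] hm by auto
      have "m - 1 \<in> {1..n} - emp (insert (m + 1, m + 1) G0)" using mb mm1 by (auto simp: emp_insert)
      then have o1: "opp n s 1 \<in> insert s filled" unfolding fi2 using sm mb by (simp add: opp_def left_seat_def)
      have o2: "opp n s (-1) = m + 1" using sm hm mb by (auto simp: opp_def right_seat_def)
      have g2: "good n (insert s filled) T2 s 1 (psi (insert (m + 1, m + 1) G0))"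
        using good_K1I[OF b2' o1] T2 by simp
      have g1: "good n (insert s filled) T1 s (-1) (psi (insert (m + 1, m + 1) G0))"
        using good_K3I[OF b2' _ o2] T1 by simp
      have ps: "psi (insert (m + 1, m + 1) G0) = 1 + psi G0" using psi_insert[OF gi2 nin2] by simp
      have "Ff i = 1" using True by (simp add: numeral_2_eq_2)
      then show ?thesis using g1 g2 s1 T1 T2 ps pG
        by (intro exI[of _ "psi (insert (m + 1, m + 1) G0)"]) auto
    next
      case False2: False
      then have i3: "3 \<le> i" using False i1 by simp
      define b where "b = h - s"
      have a1: "1 \<le> a" unfolding a_def using i3 by simp
      have sb: "m < s" "s < h" using ss a1 sr i3 unfolding a_def i_def by auto
      have ab: "a + b + 1 = i" unfolding b_def i_def using ss sb by simp
      have st: "s \<notin> taken" "s - 1 \<notin> taken" using tk(3) sb by auto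
      have T2: "T2 = insert s taken" "c2 = 0" using t2 sn st by (auto simp: take_napkin_def Let_def)
      have T1: "T1 = insert (s - 1) taken" "c1 = 0" using t1 sn st by (auto simp: take_napkin_def Let_def)
      have eH: "emp {(m, s - 1), (s + 1, h)} = {fst (m,h)..snd (m,h)} - {s}" using sb by (auto simp: emp_def)
      have wH: "\<forall>g\<in>{(m, s - 1), (s + 1, h)}. fst (m,h) \<le> fst g \<and> fst g \<le> snd g \<and> snd g \<le> snd (m,h)"
        using sb by auto
      have sH: "\<forall>g\<in>{(m, s - 1), (s + 1, h)}. \<forall>g'\<in>{(m, s - 1), (s + 1, h)}. g \<noteq> g' \<longrightarrow> snd g + 1 < fst g' \<or> snd g' + 1 < fst g"
        using sb by auto
      have eH1: "emp (insert (m, s - 1) {(s + 1, h)}) = {fst (m,h)..snd (m,h)} - {s}" using eH by simp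
      have ro1: "runok n (insert s taken) (fst (m, s - 1)) (snd (m, s - 1)) s 1"
        unfolding runok_def using tk sb mb by (auto simp: right_seat_def)
      have c1': "\<forall>g\<in>{(s + 1, h)}. gclosed (insert s taken) g" using tk sb by (auto simp: gclosed_def)
      have gg2: "good n (insert s filled) (insert s taken) s 1 (psi {(s + 1, h)} + psi G0 + Rf (snd (m, s - 1) + 1 - fst (m, s - 1)))"
        by (rule K2_build[OF gi0 nin fi0 _ _ eH1 _ _ _ _ cl0 _ _ c1' ro1]) (use sr sb wH sH in auto)
      have eH2: "emp (insert (s + 1, h) {(m, s - 1)}) = {fst (m,h)..snd (m,h)} - {s}" using eH by (simp add: insert_commute)
      have ro2: "runok n (insert (s - 1) taken) (fst (s + 1, h)) (snd (s + 1, h)) s (-1)"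
        unfolding runok_def using tk sb by (auto simp: left_seat_def)
      have c2': "\<forall>g\<in>{(m, s - 1)}. gclosed (insert (s - 1) taken) g" using tk sb by (auto simp: gclosed_def)
      have wH2: "\<forall>g\<in>insert (s + 1, h) {(m, s - 1)}. fst (m,h) \<le> fst g \<and> fst g \<le> snd g \<and> snd g \<le> snd (m,h)"
        using wH by auto
      have sH2: "\<forall>g\<in>insert (s + 1, h) {(m, s - 1)}. \<forall>g'\<in>insert (s + 1, h) {(m, s - 1)}. g \<noteq> g' \<longrightarrow> snd g + 1 < fst g' \<or> snd g' + 1 < fst g"
        using sb by auto
      have gg1: "good n (insert s filled) (insert (s - 1) taken) s (-1) (psi {(m, s - 1)} + psi G0 + Rf (snd (s + 1, h) + 1 - fst (s + 1, h)))"
        by (rule K2_build[OF gi0 nin fi0 _ _ eH2 _ _ wH2 sH2 cl0 _ _ c2' ro2]) (use sr sb in auto)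
      have p1: "psi {(s + 1, h)} = Ff b" unfolding psi_def b_def by simp
      have p2: "psi {(m, s - 1)} = Ff a" unfolding psi_def using ss sb by simp
      have r1: "snd (m, s - 1) + 1 - fst (m, s - 1) = a" using ss sb by simp
      have r2: "snd (s + 1, h) + 1 - fst (s + 1, h) = b" unfolding b_def by simp
      obtain k where k: "i = Suc (Suc (Suc k))"
      proof
        show "i = Suc (Suc (Suc (i - 3)))" using i3 by simp
      qed
      have ak: "a = (k + 2) div 2" unfolding a_def k by simp
      have bk: "b = (k + 3) div 2" using ab ak k by simp
      have Fi: "Ff i = (Rf a + Ff b + Ff a + Rf b) / 2" unfolding k ak bk by simp
      show ?thesis using gg1 gg2 T1 T2 s1 p1 p2 r1 r2 Fi pG
        by (intro exI[of _ "Ff a + psi G0 + Rf b"] exI[of _ "Ff b + psi G0 + Rf a"]) auto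
    qed
  qed
qed


lemma good_base:
  assumes "good n filled taken p q v" "{1..n} - filled = {}"
  shows "v = 0"
  using assms(1) unfolding good_def
proof (elim disjE exE conjE)
  fix G assume b: "binv n G filled taken" and v: "v = psi G"
  have ge: "ginv n G" "filled = {1..n} - emp G" using b by (auto simp: binv_def)
  have ne: "x \<notin> emp G" for x
  proof
    assume x: "x \<in> emp G"
    then have "x \<in> {1..n}" using emp_sub[OF ge(1) x] by auto
    moreover have "x \<notin> filled" using x ge(2) by blast
    ultimately show False using assms(2) by blast
  qed
  then have "emp G = {}" by blast
  then have "G = {}" using ginv_bounds b by (force simp: binv_def emp_iff)
  then show ?thesis using v by simp
next
  fix G t assume b: "binv n G filled taken" "(t, t) \<in> G"
  have te: "t \<in> emp G" using b(2) by (force simp: emp_iff)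
  have ge: "ginv n G" "filled = {1..n} - emp G" using b by (auto simp: binv_def)
  have "t \<in> {1..n}" using emp_sub[OF ge(1) te] by auto
  moreover have "t \<notin> filled" using te ge(2) by blast
  ultimately show ?thesis using assms(2) by blast
next
  fix G lo hi assume g: "ginv n (insert (lo, hi) G)" and f: "filled = {1..n} - emp (insert (lo, hi) G)"
  have "lo \<in> emp (insert (lo, hi) G)" using ginv_bounds[OF g, of "(lo,hi)"] by (auto simp: emp_insert)
  moreover have "lo \<in> {1..n}" using ginv_bounds[OF g, of "(lo,hi)"] by auto
  ultimately show ?thesis using assms(2) f by blast
qed

lemma good_step:
  assumes gd: "good n filled taken p q v" and ne: "{1..n} - filled \<noteq> {}"
    and sd: "s = next_seat n filled p q"
    and t1: "take_napkin n taken s (-1) = (T1, c1)" and t2: "take_napkin n taken s 1 = (T2, c2)"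
  shows "\<exists>v1 v2. s \<in> {1..n} \<and> s \<notin> filled \<and> good n (insert s filled) T1 s (-1) v1 \<and>
     good n (insert s filled) T2 s 1 v2 \<and> 2 * v = real c1 + v1 + real c2 + v2"
proof -
  consider (K1) G where "binv n G filled taken" "opp n p q \<in> filled" "v = psi G"
    | (K3) G t where "binv n G filled taken" "(t, t) \<in> G" "opp n p q = t" "v = psi G"
    | (K2) G lo hi where "ginv n (insert (lo, hi) G)" "(lo, hi) \<notin> G"
        "filled = {1..n} - emp (insert (lo, hi) G)" "\<forall>g\<in>G. gclosed taken g"
        "runok n taken lo hi p q" "v = psi G + Rf (hi + 1 - lo)"
    using gd unfolding good_def by blast
  then show ?thesis
  proof cases
    case (K1 G)
    have "G \<noteq> {}"
    proof
      assume "G = {}"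
      then show False using K1(1) ne by (simp add: binv_def)
    qed
    then show ?thesis using step_K1[OF K1(1,2) _ sd t1 t2] K1(3) by simp
  next
    case (K3 G t)
    show ?thesis using step_K3[OF K3(1,2,3) sd t1 t2] K3(4) by simp
  next
    case (K2 G lo hi)
    have int: "\<forall>k. lo \<le> k \<and> k < hi \<longrightarrow> k \<notin> taken" using K2(5) by (simp add: runok_def)
    from K2(5) have "(q = 1 \<and> right_seat n hi = p \<and> hi \<notin> taken \<and> lo - 1 \<in> taken) \<or>
        (q = -1 \<and> left_seat n lo = p \<and> lo - 1 \<notin> taken \<and> hi \<in> taken)" by (simp add: runok_def)
    then show ?thesis
    proof (elim disjE conjE)
      assume "q = 1" "right_seat n hi = p" "hi \<notin> taken" "lo - 1 \<in> taken"
      then show ?thesis using step_K2_left[OF K2(1-4) int _ _ _ _ t1 t2] sd K2(6) by simp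
    next
      assume "q = -1" "left_seat n lo = p" "lo - 1 \<notin> taken" "hi \<in> taken"
      then show ?thesis using step_K2_right[OF K2(1-4) int _ _ _ _ t1 t2] sd K2(6) by simp
    qed
  qed
qed

lemma main:
  assumes "good n filled taken p q v" "L = card ({1..n} - filled)"
  shows "V n filled taken p q L = 2 ^ L * v"
  using assms
proof (induction L arbitrary: filled taken p q v)
  case 0
  have "{1..n} - filled = {}" using 0(2) by simp
  then have "v = 0" using good_base[OF 0(1)] by simp
  then show ?case by (simp add: V_def pref_orders_0)
next
  case (Suc L)
  have ne: "{1..n} - filled \<noteq> {}"
  proof
    assume e: "{1..n} - filled = {}"
    have "card ({1..n} - filled) = 0" unfolding e by simp
    then show False using Suc(3) by linarith
  qed
  define s where "s = next_seat n filled p q"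
  obtain T1 c1 where t1: "take_napkin n taken s (-1) = (T1, c1)" by (cases "take_napkin n taken s (-1)")
  obtain T2 c2 where t2: "take_napkin n taken s 1 = (T2, c2)" by (cases "take_napkin n taken s 1")
  obtain v1 v2 where st: "s \<in> {1..n}" "s \<notin> filled" "good n (insert s filled) T1 s (-1) v1"
    "good n (insert s filled) T2 s 1 v2" "2 * v = real c1 + v1 + real c2 + v2"
    using good_step[OF Suc(2) ne s_def t1 t2] by blast
  have "{1..n} - insert s filled = ({1..n} - filled) - {s}" by blast
  then have cL: "L = card ({1..n} - insert s filled)" using Suc(3) st(1,2) by simp
  have "V n filled taken p q (Suc L) =
    2^L * real c1 + V n (insert s filled) T1 s (-1) L + 2^L * real c2 + V n (insert s filled) T2 s 1 L"
    by (rule V_Suc[OF s_def t1 t2])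
  also have "\<dots> = 2^L * (real c1 + v1 + real c2 + v2)"
    using Suc.IH[OF st(3) cL] Suc.IH[OF st(4) cL] by (simp add: algebra_simps)
  also have "\<dots> = 2 ^ Suc L * v" using st(5) by simp
  finally show ?case .
qed

lemma E_S_Rf:
  assumes "1 \<le> n"
  shows "E_S n = Rf (n - 1)"
proof -
  obtain L where n: "n = Suc L" using assms by (cases n) auto
  have tk1: "take_napkin n {} 1 1 = ({1}, 0)"
    by (simp add: take_napkin_def right_napkin_def Let_def)
  have tk2: "take_napkin n {} 1 (-1) = ({n}, 0)"
    by (simp add: take_napkin_def left_napkin_def Let_def)
  have nu1: "real (nu_S (1 # xs)) = real (seat_rest n {1} {1} 1 1 xs)" if "xs \<in> pref_orders L" for xs
    using that tk1 n by (simp add: nu_S_def pref_orders_def)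
  have nu2: "real (nu_S ((-1) # xs)) = real (seat_rest n {1} {n} 1 (-1) xs)" if "xs \<in> pref_orders L" for xs
    using that tk2 n by (simp add: nu_S_def pref_orders_def)
  have S: "(\<Sum>\<sigma>\<in>pref_orders n. real (nu_S \<sigma>)) = V n {1} {n} 1 (-1) L + V n {1} {1} 1 1 L"
  proof -
    have "(\<Sum>\<sigma>\<in>pref_orders n. real (nu_S \<sigma>)) =
      (\<Sum>xs\<in>pref_orders L. real (nu_S ((-1) # xs))) + (\<Sum>xs\<in>pref_orders L. real (nu_S (1 # xs)))"
      unfolding n by (rule sum_pref_orders_Suc)
    also have "(\<Sum>xs\<in>pref_orders L. real (nu_S ((-1) # xs))) = V n {1} {n} 1 (-1) L"
      unfolding V_def by (rule sum.cong[OF refl nu2])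
    also have "(\<Sum>xs\<in>pref_orders L. real (nu_S (1 # xs))) = V n {1} {1} 1 1 L"
      unfolding V_def by (rule sum.cong[OF refl nu1])
    finally show ?thesis .
  qed
  show ?thesis
  proof (cases "L = 0")
    case True
    then show ?thesis using S n
      by (simp add: E_S_def V_def pref_orders_0)
  next
    case False
    have n2: "2 \<le> n" using False n by simp
    have gi: "ginv n (insert (2, n) {})" using n2 by (simp add: ginv_def)
    have fi: "{1} = {1..n} - emp (insert (2, n) {})" using n2 by (auto simp: emp_insert)
    have r1: "runok n {1} 2 n 1 1" using n2 by (auto simp: runok_def right_seat_def)
    have r2: "runok n {n} 2 n 1 (-1)" using n2 by (auto simp: runok_def left_seat_def)
    have g1: "good n {1} {1} 1 1 (psi {} + Rf (n + 1 - 2))" by (rule good_K2I[OF gi _ fi _ r1]) auto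
    have g2: "good n {1} {n} 1 (-1) (psi {} + Rf (n + 1 - 2))" by (rule good_K2I[OF gi _ fi _ r2]) auto
    have c: "L = card ({1..n} - {1})" using n by simp
    have "V n {1} {1} 1 1 L = 2 ^ L * Rf L" using main[OF g1 c] n by simp
    moreover have "V n {1} {n} 1 (-1) L = 2 ^ L * Rf L" using main[OF g2 c] n by simp
    ultimately show ?thesis using S n by (simp add: E_S_def)
  qed
qed

lemma nat_floor_half: "nat \<lfloor>real (n + 1) / 2\<rfloor> = (n + 1) div 2"
  by (metis floor_divide_of_nat_eq nat_int of_nat_numeral of_nat_1 of_nat_add)

theorem proposition5:
  shows "E_S 1 = 0 \<and> E_S 2 = 0 \<and> E_S 3 = 1/2 \<and> E_S 4 = 3/4 \<and>
    (\<forall>n::nat. n \<ge> 5 \<longrightarrow>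
      E_S n = (1/2) * (E_S (n - 1) + E_S (nat \<lfloor>real (n + 1) / 2\<rfloor>)
                        + E_S (nat \<lceil>real (n + 1) / 2\<rceil>)))"
proof -
  have R1: "Rf (Suc 0) = 0" by simp
  have R2: "Rf 2 = 1/2" by (simp add: numeral_2_eq_2)
  have R3: "Rf 3 = 3/4" by (simp add: numeral_3_eq_3 numeral_2_eq_2)
  have A: "Rf (Suc m) = (Rf m + Ff m) / 2" for m by (rule Rf.simps(2))
  have gen: "E_S n = (1/2) * (E_S (n - 1) + E_S (nat \<lfloor>real (n + 1) / 2\<rfloor>)
                        + E_S (nat \<lceil>real (n + 1) / 2\<rceil>))" if n5: "n \<ge> 5" for n
  proof -
    define k where "k = n - 5"
    have kn: "n = k + 5" using n5 k_def by simp
    define a where "a = (k + 2) div 2"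
    define b where "b = (k + 3) div 2"
    have fl: "nat \<lfloor>real (n + 1) / 2\<rfloor> = a + 2" unfolding nat_floor_half kn a_def by simp
    have ce: "nat \<lceil>real (n + 1) / 2\<rceil> = b + 2"
      using nat_ceil_half[of "n + 1"] kn b_def by simp
    define j where "j = Suc (Suc (Suc k))"
    have n1: "1 \<le> n" "1 \<le> n - 1" "1 \<le> a + 2" "1 \<le> b + 2" using n5 by auto
    have nj: "n - 1 = Suc j" "n - 1 - 1 = j" "a + 2 - 1 = Suc a" "b + 2 - 1 = Suc b" using kn j_def by auto
    have e1: "E_S n = Rf (Suc j)" using E_S_Rf[OF n1(1)] unfolding nj .
    have e2: "E_S (n - 1) = Rf j" using E_S_Rf[OF n1(2)] by (simp only: nj(2))
    have e3: "E_S (a + 2) = Rf (Suc a)" using E_S_Rf[OF n1(3)] unfolding nj .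
    have e4: "E_S (b + 2) = Rf (Suc b)" using E_S_Rf[OF n1(4)] unfolding nj .
    have B: "Ff j = (Rf a + Ff b + Ff a + Rf b) / 2" unfolding j_def a_def b_def by (rule Ff.simps(4))
    show ?thesis unfolding fl ce e1 e2 e3 e4 A B by (simp add: field_simps)
  qed
  show ?thesis
    using E_S_Rf[of 1] E_S_Rf[of 2] E_S_Rf[of 3] E_S_Rf[of 4] R1 R2 R3 gen by simp
qed

end
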